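(* Fix a finite horizon $T\in\mathbb{N}$, a time $t<T$, and a time-$t$ policy $\pi_t:\mathcal{S}\times\mathcal{C}\to\Delta(\mathcal{A})$. Let $K$ be an objective functional that is indifferent to mixtures. Let $\eta_{t+1},\eta'_{t+1}:\mathcal{S}\times\mathcal{C}\to\Delta(\mathbb{R})$ be two return distribution functions for time $t+1$ such that $(F_K\eta_{t+1})(s,c)\ge (F_K\eta'_{t+1})(s,c)$ for all $(s,c)\in\mathcal{S}\times\mathcal{C}$. Then $(F_K(\mathcal{T}^d_{\pi_t}\eta_{t+1}))(s,c)\ge (F_K(\mathcal{T}^d_{\pi_t}\eta'_{t+1}))(s,c)$ for all $(s,c)\in\mathcal{S}\times\mathcal{C}$.
   Context: Setting: a Markov decision process with state space $\mathcal{S}$, action space $\mathcal{A}$, transition kernel $P:\mathcal{S}\times\mathcal{A}\to\Delta(\mathcal{S})$ and reward distribution $R:\mathcal{S}\times\mathcal{A}\to\Delta(\mathbb{R})$. The stock space is $\mathcal{C}=\mathbb{R}$. A discount function $d:\mathbb{N}_0\to\mathbb{R}_{>0}$, $d_t\doteq d(t)$, satisfies $d_0=1$ and $d_{t+1}\le d_t$ for all $t$; the one-step discount factor is $\hat d_t\doteq d_{t+1}/d_t\in(0,1]$. For a return distribution function $\eta_{t+1}:\mathcal{S}\times\mathcal{C}\to\Delta(\mathbb{R})$ and a time-$t$ policy $\pi_t$, the time-dependent distributional Bellman operator is $(\mathcal{T}^d_{\pi_t}\eta_{t+1})(s,c)\doteq \mathrm{df}\big(R_{t+1}+\hat d_t\,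 G\big)$, where $A_t\sim\pi_t(\cdot\mid s,c)$, $S_{t+1}\sim P(\cdot\mid s,A_t)$, $R_{t+1}\sim R(\cdot\mid s,A_t)$, and conditionally $G\sim\eta_{t+1}\big(S_{t+1},(c+R_{t+1})/\hat d_t\big)$; $\mathrm{df}$ denotes the distribution of a random variable. For a statistical functional $K:\Delta(\mathbb{R})\to\mathbb{R}$ (write $K(X)\doteq K\,\mathrm{df}(X)$) and a time-$t$ return distribution function $\eta_t$, define $(F_K\eta_t)(s,c)\doteq K\,\mathrm{df}\big(d_tc+d_tG(s,c)\big)/d_t$ with $G(s,c)\sim\eta_t(s,c)$. $K$ is indifferent to mixtures if for all $\eta,\eta':\mathcal{S}\times\mathcal{C}\to\Delta(\mathbb{R})$ with $K\eta(s,c)\ge K\eta'(s,c)$ for all $(s,c)$, and any random variable $(S,C)$ with values in $\mathcal{S}\times\mathcal{C}$, one has $K(G(S,C))\ge K(G'(S,C))$, where $G(s,c)\sim\eta(s,c)$ and $G'(s,c)\sim\eta'(s,c)$. *)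

theory Defs
  imports "HOL-Probability.Probability"
begin

text \<open>Delta(X) is rendered as probability measures on the measurable space X
(elements of prob_algebra X); the stock space C = R carries the Borel sigma-algebra.\<close>

definition rdf :: "'s measure \<Rightarrow> ('s \<times> real \<Rightarrow> real measure) \<Rightarrow> bool" where
  "rdf SM \<eta> \<longleftrightarrow> \<eta> \<in> SM \<Otimes>\<^sub>M borel \<rightarrow>\<^sub>M prob_algebra borel"

definition dhat :: "(nat \<Rightarrow> real) \<Rightarrow> nat \<Rightarrow> real" where
  "dhat d t = d (Suc t) / d t"

definition bellman ::
  "('s \<times> 'a \<Rightarrow> 's measure) \<Rightarrow> ('s \<times> 'a \<Rightarrow> real measure) \<Rightarrow> (nat \<Rightarrow> real) \<Rightarrow> nat
   \<Rightarrow> ('s \<times> real \<Rightarrow> 'a measure) \<Rightarrow> ('s \<times> real \<Rightarrow> real measure) \<Rightarrow> 's \<times> real \<Rightarrow> real measure" where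
  "bellman P R d t \<pi> \<eta> = (\<lambda>(s, c).
     bind (\<pi> (s, c)) (\<lambda>a.
       bind (P (s, a) \<Otimes>\<^sub>M R (s, a)) (\<lambda>(s', r).
         distr (\<eta> (s', (c + r) / dhat d t)) borel (\<lambda>g. r + dhat d t * g))))"

definition FK :: "(real measure \<Rightarrow> real) \<Rightarrow> (nat \<Rightarrow> real) \<Rightarrow> nat
   \<Rightarrow> ('s \<times> real \<Rightarrow> real measure) \<Rightarrow> 's \<times> real \<Rightarrow> real" where
  "FK K d t \<eta> = (\<lambda>(s, c). K (distr (\<eta> (s, c)) borel (\<lambda>g. d t * c + d t * g)) / d t)"

definition indifferent_to_mixtures :: "'s measure \<Rightarrow> (real measure \<Rightarrow> real) \<Rightarrow> bool" where
  "indifferent_to_mixtures SM K \<longleftrightarrow>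
     (\<forall>\<eta> \<eta>'. rdf SM \<eta> \<longrightarrow> rdf SM \<eta>' \<longrightarrow>
        (\<forall>x \<in> space (SM \<Otimes>\<^sub>M borel). K (\<eta> x) \<ge> K (\<eta>' x)) \<longrightarrow>
        (\<forall>\<mu> \<in> space (prob_algebra (SM \<Otimes>\<^sub>M borel)).
            K (bind \<mu> \<eta>) \<ge> K (bind \<mu> \<eta>')))"

end

theory Submission
  imports Defs
begin

lemma key:
  fixes SM :: "'s measure" and AM :: "'a measure"
  assumes P_kernel[measurable]: "P \<in> SM \<Otimes>\<^sub>M AM \<rightarrow>\<^sub>M prob_algebra SM"
    and R_kernel[measurable]: "R \<in> SM \<Otimes>\<^sub>M AM \<rightarrow>\<^sub>M prob_algebra borel"
    and d_pos: "\<And>n. d n > 0"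
    and pi_kernel[measurable]: "\<pi> \<in> SM \<Otimes>\<^sub>M borel \<rightarrow>\<^sub>M prob_algebra AM"
    and eta[measurable]: "\<eta> \<in> SM \<Otimes>\<^sub>M borel \<rightarrow>\<^sub>M prob_algebra borel"
    and s: "s \<in> space SM"
  shows "distr (bellman P R d t \<pi> \<eta> (s, c)) borel (\<lambda>g. d t * c + d t * g)
    = bind (bind (\<pi> (s, c)) (\<lambda>a. distr (P (s, a) \<Otimes>\<^sub>M R (s, a)) (SM \<Otimes>\<^sub>M borel) (\<lambda>(s', r). (s', (c + r) / dhat d t))))
        (\<lambda>(s', c'). distr (\<eta> (s', c')) borel (\<lambda>g. d (Suc t) * c' + d (Suc t) * g))"
proof -
  define dh where "dh = dhat d t"
  have dh_pos: "dh > 0" using d_pos by (simp add: dh_def dhat_def)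
  have dSuc: "d (Suc t) = d t * dh" using d_pos[of t] by (simp add: dh_def dhat_def)
  define Pi where "Pi = \<pi> (s, c)"
  define PR where "PR = (\<lambda>a. P (s, a) \<Otimes>\<^sub>M R (s, a))"
  define F where "F = (\<lambda>(s', r). distr (\<eta> (s', (c + r) / dh)) borel (\<lambda>g. r + dh * g))"
  define \<phi> where "\<phi> = (\<lambda>(s'::'s, r::real). (s', (c + r) / dh))"
  define \<eta>2 where "\<eta>2 = (\<lambda>(s', c'). distr (\<eta> (s', c')) borel (\<lambda>g. d (Suc t) * c' + d (Suc t) * g))"
  define h where "h = (\<lambda>g::real. d t * c + d t * g)"
  have Pi_sp: "Pi \<in> space (prob_algebra AM)" unfolding Pi_def
    using measurable_space[OF pi_kernel] s by (auto simp: space_pair_measure)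
  have Pi_sets: "sets Pi = sets AM" using Pi_sp by (simp add: space_prob_algebra)
  have Pi_ne: "space Pi \<noteq> {}" using Pi_sp by (simp add: space_prob_algebra prob_space.not_empty)
  have Ps[measurable]: "(\<lambda>a. P (s, a)) \<in> AM \<rightarrow>\<^sub>M prob_algebra SM" using s by measurable
  have Rs[measurable]: "(\<lambda>a. R (s, a)) \<in> AM \<rightarrow>\<^sub>M prob_algebra borel" using s by measurable
  have PR_m: "PR \<in> AM \<rightarrow>\<^sub>M prob_algebra (SM \<Otimes>\<^sub>M borel)"
    unfolding PR_def
  proof (rule measurable_prob_algebraI)
    fix a assume "a \<in> space AM"
    then show "prob_space (P (s, a) \<Otimes>\<^sub>M R (s, a))"
      using measurable_space[OF Ps] measurable_space[OF Rs]
      by (intro prob_space_pair) (auto simp: space_prob_algebra)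
  next
    show "(\<lambda>a. P (s, a) \<Otimes>\<^sub>M R (s, a)) \<in> AM \<rightarrow>\<^sub>M subprob_algebra (SM \<Otimes>\<^sub>M borel)"
      by (rule measurable_pair_measure[OF measurable_prob_algebraD[OF Ps] measurable_prob_algebraD[OF Rs]])
  qed
  have F_m: "F \<in> SM \<Otimes>\<^sub>M borel \<rightarrow>\<^sub>M prob_algebra borel"
    unfolding F_def by measurable
  have phi_m: "\<phi> \<in> SM \<Otimes>\<^sub>M borel \<rightarrow>\<^sub>M SM \<Otimes>\<^sub>M borel" unfolding \<phi>_def by measurable
  have eta2_m: "\<eta>2 \<in> SM \<Otimes>\<^sub>M borel \<rightarrow>\<^sub>M prob_algebra borel" unfolding \<eta>2_def by measurable
  have h_m: "h \<in> borel \<rightarrow>\<^sub>M borel" unfolding h_def by measurable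
  have k_m: "(\<lambda>a. bind (PR a) F) \<in> AM \<rightarrow>\<^sub>M prob_algebra borel"
    using measurable_bind_prob_space[OF PR_m F_m] .
  have PRsp: "a \<in> space AM \<Longrightarrow> PR a \<in> space (prob_algebra (SM \<Otimes>\<^sub>M borel))" for a
    using measurable_space[OF PR_m] by auto
  have pt: "x \<in> space (SM \<Otimes>\<^sub>M borel) \<Longrightarrow> distr (F x) borel h = \<eta>2 (\<phi> x)" for x
  proof -
    assume x: "x \<in> space (SM \<Otimes>\<^sub>M borel)"
    obtain s' r where xe: "x = (s', r)" by force
    have sp: "\<eta> (s', (c + r) / dh) \<in> space (prob_algebra borel)"
      using measurable_space[OF eta] x xe by (auto simp: space_pair_measure)
    have "distr (F x) borel h = distr (\<eta> (s', (c + r) / dh)) borel (h \<circ> (\<lambda>g. r + dh * g))"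
    proof -
      have e: "sets (\<eta> (s', (c + r) / dh)) = sets borel" using sp by (simp add: space_prob_algebra)
      have m: "(\<lambda>g::real. r + dh * g) \<in> \<eta> (s', (c + r) / dh) \<rightarrow>\<^sub>M borel"
        unfolding measurable_cong_sets[OF e refl] by measurable
      show ?thesis unfolding F_def xe prod.case by (rule distr_distr[OF h_m m])
    qed
    also have "\<dots> = \<eta>2 (\<phi> x)"
      unfolding \<eta>2_def \<phi>_def xe h_def using dh_pos
      by (auto intro!: distr_cong simp: dSuc field_simps)
    finally show ?thesis .
  qed
  have "distr (bellman P R d t \<pi> \<eta> (s, c)) borel h = distr (bind Pi (\<lambda>a. bind (PR a) F)) borel h"
    unfolding bellman_def Pi_def PR_def F_def dh_def by simp
  also have "\<dots> = bind Pi (\<lambda>a. distr (bind (PR a) F) borel h)"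
    by (rule distr_bind[OF _ Pi_ne h_m])
       (simp add: measurable_cong_sets[OF Pi_sets refl] measurable_prob_algebraD[OF k_m])
  also have "\<dots> = bind Pi (\<lambda>a. bind (PR a) (\<lambda>x. \<eta>2 (\<phi> x)))"
  proof (rule bind_cong[OF refl])
    fix a assume "a \<in> space Pi"
    then have a: "a \<in> space AM" using sets_eq_imp_space_eq[OF Pi_sets] by simp
    have sPR: "sets (PR a) = sets (SM \<Otimes>\<^sub>M borel)" and nePR: "space (PR a) \<noteq> {}"
      using PRsp[OF a] by (auto simp: space_prob_algebra prob_space.not_empty)
    have "distr (bind (PR a) F) borel h = bind (PR a) (\<lambda>x. distr (F x) borel h)"
      by (rule distr_bind[OF _ nePR h_m])
         (simp add: measurable_cong_sets[OF sPR refl] measurable_prob_algebraD[OF F_m])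
    also have "\<dots> = bind (PR a) (\<lambda>x. \<eta>2 (\<phi> x))"
      by (rule bind_cong[OF refl]) (simp add: pt sets_eq_imp_space_eq[OF sPR])
    finally show "distr (bind (PR a) F) borel h = bind (PR a) (\<lambda>x. \<eta>2 (\<phi> x))" .
  qed
  also have "\<dots> = bind Pi (\<lambda>a. bind (distr (PR a) (SM \<Otimes>\<^sub>M borel) \<phi>) \<eta>2)"
  proof (rule bind_cong[OF refl])
    fix a assume "a \<in> space Pi"
    then have a: "a \<in> space AM" using sets_eq_imp_space_eq[OF Pi_sets] by simp
    have sPR: "sets (PR a) = sets (SM \<Otimes>\<^sub>M borel)" and nePR: "space (PR a) \<noteq> {}"
      using PRsp[OF a] by (auto simp: space_prob_algebra prob_space.not_empty)
    show "bind (PR a) (\<lambda>x. \<eta>2 (\<phi> x)) = bind (distr (PR a) (SM \<Otimes>\<^sub>M borel) \<phi>) \<eta>2"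
      by (rule bind_distr[symmetric, OF _ measurable_prob_algebraD[OF eta2_m] nePR])
         (simp add: measurable_cong_sets[OF sPR refl] phi_m)
  qed
  also have "\<dots> = bind (bind Pi (\<lambda>a. distr (PR a) (SM \<Otimes>\<^sub>M borel) \<phi>)) \<eta>2"
  proof (rule bind_assoc[symmetric])
    have "(\<lambda>a. distr (PR a) (SM \<Otimes>\<^sub>M borel) \<phi>) \<in> AM \<rightarrow>\<^sub>M subprob_algebra (SM \<Otimes>\<^sub>M borel)"
      using measurable_compose[OF measurable_prob_algebraD[OF PR_m] measurable_distr[OF phi_m]] by (simp add: comp_def)
    then show "(\<lambda>a. distr (PR a) (SM \<Otimes>\<^sub>M borel) \<phi>) \<in> Pi \<rightarrow>\<^sub>M subprob_algebra (SM \<Otimes>\<^sub>M borel)"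
      by (simp add: measurable_cong_sets[OF Pi_sets refl])
    show "\<eta>2 \<in> SM \<Otimes>\<^sub>M borel \<rightarrow>\<^sub>M subprob_algebra borel" using measurable_prob_algebraD[OF eta2_m] .
  qed
  finally show ?thesis unfolding h_def Pi_def PR_def \<phi>_def \<eta>2_def dh_def .
qed

theorem mainTheorem1:
  fixes SM :: "'s measure" and AM :: "'a measure"
    and P :: "'s \<times> 'a \<Rightarrow> 's measure" and R :: "'s \<times> 'a \<Rightarrow> real measure"
    and d :: "nat \<Rightarrow> real" and Thor t :: nat
    and \<pi> :: "'s \<times> real \<Rightarrow> 'a measure"
    and K :: "real measure \<Rightarrow> real"
    and \<eta> \<eta>' :: "'s \<times> real \<Rightarrow> real measure"
  assumes P_kernel: "P \<in> SM \<Otimes>\<^sub>M AM \<rightarrow>\<^sub>M prob_algebra SM"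
    and R_kernel: "R \<in> SM \<Otimes>\<^sub>M AM \<rightarrow>\<^sub>M prob_algebra borel"
    and d0: "d 0 = 1" and d_pos: "\<And>n. d n > 0" and d_mono: "\<And>n. d (Suc n) \<le> d n"
    and t_lt: "t < Thor"
    and \<pi>_kernel: "\<pi> \<in> SM \<Otimes>\<^sub>M borel \<rightarrow>\<^sub>M prob_algebra AM"
    and K_indiff: "indifferent_to_mixtures SM K"
    and \<eta>_rdf: "rdf SM \<eta>" and \<eta>'_rdf: "rdf SM \<eta>'"
    and dom: "\<And>s c. s \<in> space SM \<Longrightarrow> FK K d (Suc t) \<eta> (s, c) \<ge> FK K d (Suc t) \<eta>' (s, c)"
  shows "\<forall>s \<in> space SM. \<forall>c :: real.
           FK K d t (bellman P R d t \<pi> \<eta>) (s, c) \<ge> FK K d t (bellman P R d t \<pi> \<eta>') (s, c)"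
proof (intro ballI allI)
  fix s c assume s: "s \<in> space SM"
  have eta[measurable]: "\<eta> \<in> SM \<Otimes>\<^sub>M borel \<rightarrow>\<^sub>M prob_algebra borel" using \<eta>_rdf by (simp add: rdf_def)
  have eta'[measurable]: "\<eta>' \<in> SM \<Otimes>\<^sub>M borel \<rightarrow>\<^sub>M prob_algebra borel" using \<eta>'_rdf by (simp add: rdf_def)
  note [measurable] = P_kernel R_kernel \<pi>_kernel
  define \<mu> where "\<mu> = bind (\<pi> (s, c)) (\<lambda>a. distr (P (s, a) \<Otimes>\<^sub>M R (s, a)) (SM \<Otimes>\<^sub>M borel) (\<lambda>(s', r). (s', (c + r) / dhat d t)))"
  define \<eta>2 where "\<eta>2 = (\<lambda>(s', c'). distr (\<eta> (s', c')) borel (\<lambda>g. d (Suc t) * c' + d (Suc t) * g))"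
  define \<eta>2' where "\<eta>2' = (\<lambda>(s', c'). distr (\<eta>' (s', c')) borel (\<lambda>g. d (Suc t) * c' + d (Suc t) * g))"
  have e1: "distr (bellman P R d t \<pi> \<eta> (s, c)) borel (\<lambda>g. d t * c + d t * g) = bind \<mu> \<eta>2"
    unfolding \<mu>_def \<eta>2_def by (rule key[OF P_kernel R_kernel d_pos \<pi>_kernel eta s])
  have e2: "distr (bellman P R d t \<pi> \<eta>' (s, c)) borel (\<lambda>g. d t * c + d t * g) = bind \<mu> \<eta>2'"
    unfolding \<mu>_def \<eta>2'_def by (rule key[OF P_kernel R_kernel d_pos \<pi>_kernel eta' s])
  have r1: "rdf SM \<eta>2" unfolding rdf_def \<eta>2_def by measurable
  have r2: "rdf SM \<eta>2'" unfolding rdf_def \<eta>2'_def by measurable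
  have dm: "K (\<eta>2 x) \<ge> K (\<eta>2' x)" if x: "x \<in> space (SM \<Otimes>\<^sub>M borel)" for x
  proof -
    obtain s' c' where xe: "x = (s', c')" by force
    have "s' \<in> space SM" using x xe by (simp add: space_pair_measure)
    from dom[OF this, of c'] have "K (\<eta>2' x) / d (Suc t) \<le> K (\<eta>2 x) / d (Suc t)"
      unfolding FK_def \<eta>2_def \<eta>2'_def xe by simp
    then show ?thesis using d_pos[of "Suc t"] by (simp add: divide_le_cancel)
  qed
  have Ps[measurable]: "(\<lambda>a. P (s, a)) \<in> AM \<rightarrow>\<^sub>M prob_algebra SM" using s by measurable
  have Rs[measurable]: "(\<lambda>a. R (s, a)) \<in> AM \<rightarrow>\<^sub>M prob_algebra borel" using s by measurable
  have PR_m: "(\<lambda>a. P (s, a) \<Otimes>\<^sub>M R (s, a)) \<in> AM \<rightarrow>\<^sub>M prob_algebra (SM \<Otimes>\<^sub>M borel)"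
  proof (rule measurable_prob_algebraI)
    fix a assume "a \<in> space AM"
    then show "prob_space (P (s, a) \<Otimes>\<^sub>M R (s, a))"
      using measurable_space[OF Ps] measurable_space[OF Rs]
      by (intro prob_space_pair) (auto simp: space_prob_algebra)
  next
    show "(\<lambda>a. P (s, a) \<Otimes>\<^sub>M R (s, a)) \<in> AM \<rightarrow>\<^sub>M subprob_algebra (SM \<Otimes>\<^sub>M borel)"
      by (rule measurable_pair_measure[OF measurable_prob_algebraD[OF Ps] measurable_prob_algebraD[OF Rs]])
  qed
  have phi_m: "(\<lambda>(s'::'s, r::real). (s', (c + r) / dhat d t)) \<in> SM \<Otimes>\<^sub>M borel \<rightarrow>\<^sub>M SM \<Otimes>\<^sub>M borel" by measurable
  have g_m: "(\<lambda>a. distr (P (s, a) \<Otimes>\<^sub>M R (s, a)) (SM \<Otimes>\<^sub>M borel) (\<lambda>(s', r). (s', (c + r) / dhat d t)))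
      \<in> AM \<rightarrow>\<^sub>M prob_algebra (SM \<Otimes>\<^sub>M borel)"
    using measurable_compose[OF PR_m measurable_distr_prob_space[OF phi_m]] by (simp add: comp_def)
  have Pi_sp: "\<pi> (s, c) \<in> space (prob_algebra AM)"
    using measurable_space[OF \<pi>_kernel] s by (auto simp: space_pair_measure)
  have mu: "\<mu> \<in> space (prob_algebra (SM \<Otimes>\<^sub>M borel))"
    unfolding \<mu>_def space_prob_algebra using prob_space_bind'[OF Pi_sp g_m] sets_bind'[OF Pi_sp g_m] by simp
  have "K (bind \<mu> \<eta>2) \<ge> K (bind \<mu> \<eta>2')"
    using K_indiff r1 r2 dm mu unfolding indifferent_to_mixtures_def by blast
  then show "FK K d t (bellman P R d t \<pi> \<eta>) (s, c) \<ge> FK K d t (bellman P R d t \<pi> \<eta>') (s, c)"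
    unfolding FK_def using e1 e2 d_pos[of t] by (simp add: divide_right_mono)
qed

end
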